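(* Let $p\in(0,1/2)$ and $\beta<0$. Then there exists $r_0=r_0(p,\beta)>0$ and a convex function $u$ with the following properties: - $u\in C^\infty(\Sigma_{\beta,r_0})$, $u$ is continuous up to $\varsigma_{\beta,r_0}$, and $u>0$ in $\Sigma_{\beta,r_0}$; - $u$ solves $\det D^2u=u^p$ in $\Sigma_{\beta,r_0}$; - $u=0$ on $\varsigma_{\beta,r_0}$.
   Context: For $\beta<0$ and $r_0>0$, define the "wiping domain" and its boundary curve by $$\Sigma_{\beta,r_0}=\{(x,y)\in\mathbb{R}^2:\ y>0,\ e^xy^\beta>r_0\},\qquad \varsigma_{\beta,r_0}=\{(x,y)\in\mathbb{R}^2:\ y>0,\ e^xy^\beta=r_0\}.$$ *)

theory Defs
  imports "HOL-Analysis.Analysis"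
begin

definition wiping_domain :: "real \<Rightarrow> real \<Rightarrow> (real \<times> real) set" where
  "wiping_domain \<beta> r0 = {(x, y). y > 0 \<and> exp x * y powr \<beta> > r0}"

definition wiping_curve :: "real \<Rightarrow> real \<Rightarrow> (real \<times> real) set" where
  "wiping_curve \<beta> r0 = {(x, y). y > 0 \<and> exp x * y powr \<beta> = r0}"

fun Ck_on :: "nat \<Rightarrow> (real \<times> real) set \<Rightarrow> (real \<times> real \<Rightarrow> real) \<Rightarrow> bool" where
  "Ck_on 0 S f = continuous_on S f"
| "Ck_on (Suc k) S f = (\<exists>fx fy.
      (\<forall>z\<in>S. (f has_derivative (\<lambda>h. fx z * fst h + fy z * snd h)) (at z))
      \<and> Ck_on k S fx \<and> Ck_on k S fy)"

definition C_infinity_on :: "(real \<times> real) set \<Rightarrow> (real \<times> real \<Rightarrow> real) \<Rightarrow> bool" where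
  "C_infinity_on S f = (\<forall>k. Ck_on k S f)"

definition pd1 :: "(real \<times> real \<Rightarrow> real) \<Rightarrow> real \<times> real \<Rightarrow> real" where
  "pd1 f z = deriv (\<lambda>t. f (t, snd z)) (fst z)"

definition pd2 :: "(real \<times> real \<Rightarrow> real) \<Rightarrow> real \<times> real \<Rightarrow> real" where
  "pd2 f z = deriv (\<lambda>t. f (fst z, t)) (snd z)"

definition det_hessian :: "(real \<times> real \<Rightarrow> real) \<Rightarrow> real \<times> real \<Rightarrow> real" where
  "det_hessian f z = pd1 (pd1 f) z * pd2 (pd2 f) z - pd2 (pd1 f) z * pd1 (pd2 f) z"

end

theory Submission
  imports Defs
begin


locale ode =
  fixes a b p :: real
  assumes a1: "a > 1" and b0: "b > 0" and p0: "0 < p" and p1: "p \<le> 1"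
begin

definition al where "al = a * (a - 1)"
definition Phi where "Phi g P = (a\<^sup>2 * P\<^sup>2 + g powr p) / (P * (al * g + b * P))"
definition phi where "phi g P = Phi (max g 0) (max P 1)"
definition N where "N = 1 / b + 1 / al"
definition M where "M = a\<^sup>2 / b + N"
definition Kc where "Kc = a\<^sup>2 / b + 2 * N"

lemma al0: "al > 0" unfolding al_def using a1 by simp
lemma N0: "N > 0" unfolding N_def using al0 b0 by (intro add_pos_pos) auto
lemma M0: "M > 0" unfolding M_def using N0 b0 by (intro add_nonneg_pos) auto
lemma Kc0: "Kc > 0" unfolding Kc_def using N0 b0 by (intro add_nonneg_pos) auto

lemma L1: assumes g: "g \<ge> 0" shows "g powr p / (al * g + b) \<le> N"
proof (cases "g \<le> 1")
  case True
  have "g powr p \<le> 1" using powr_le1[of p g] True g p0 by simp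
  moreover have "al * g + b \<ge> b" using al0 g by simp
  ultimately have "g powr p / (al * g + b) \<le> 1 / b"
    using b0 by (intro frac_le) auto
  moreover have "1 / al > 0" using al0 by simp
  ultimately show ?thesis unfolding N_def by linarith
next
  case False
  have "g powr p \<le> g powr 1" using powr_mono[of p 1 g] False p1 by simp
  then have gp: "g powr p \<le> g" using False by simp
  have "al * g \<ge> 0" using al0 g by simp
  then have pos: "al * g + b > 0" using b0 by linarith
  have "g / (al * g + b) \<le> 1 / al"
    using al0 b0 g pos by (simp add: divide_simps)
  moreover have "g powr p / (al * g + b) \<le> g / (al * g + b)"
    using gp pos by (intro divide_right_mono) auto
  ultimately have "g powr p / (al * g + b) \<le> 1 / al" by linarith
  moreover have "1 / b > 0" using b0 by simp
  ultimately show ?thesis unfolding N_def by linarith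
qed

lemma Phi_split:
  assumes g: "g \<ge> 0" and P: "P \<ge> 1"
  shows "Phi g P = a\<^sup>2 * P / (al * g + b * P) + g powr p / (P * (al * g + b * P))"
proof -
  have "al * g \<ge> 0" using al0 g by simp
  moreover have "b * P > 0" using b0 P by simp
  ultimately have D: "al * g + b * P > 0" by linarith
  have "Phi g P = a\<^sup>2 * P\<^sup>2 / (P * (al * g + b * P)) + g powr p / (P * (al * g + b * P))"
    unfolding Phi_def by (simp add: add_divide_distrib)
  moreover have "a\<^sup>2 * P\<^sup>2 / (P * (al * g + b * P)) = a\<^sup>2 * P / (al * g + b * P)"
    using P D by (simp add: power2_eq_square)
  ultimately show ?thesis by simp
qed

lemma Phi_bound:
  assumes g: "g \<ge> 0" and P: "P \<ge> 1"
  shows "0 \<le> Phi g P \<and> Phi g P \<le> M"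
proof -
  define D where "D = al * g + b * P"
  have D1: "D \<ge> al * g + b" unfolding D_def using b0 P by simp
  have Db: "D \<ge> b * P" unfolding D_def using al0 g by simp
  have "al * g \<ge> 0" using al0 g by simp
  then have Dp: "D > 0" using D1 b0 by linarith
  have t1: "a\<^sup>2 * P / D \<le> a\<^sup>2 / b"
  proof -
    have "a\<^sup>2 * P / D \<le> a\<^sup>2 * P / (b * P)"
      using Db b0 P Dp by (intro divide_left_mono) (auto intro!: mult_pos_pos)
    also have "\<dots> = a\<^sup>2 / b" using P by simp
    finally show ?thesis .
  qed
  have t2: "g powr p / (P * D) \<le> N"
  proof -
    have "1 * D \<le> P * D" using P Dp by (intro mult_right_mono) auto
    then have "P * D \<ge> al * g + b" using D1 by linarith
    moreover have m: "al * g + b > 0" using Dp D1 \<open>al * g \<ge> 0\<close> b0 by linarith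
    ultimately have "g powr p / (P * D) \<le> g powr p / (al * g + b)"
      by (intro divide_left_mono) (auto intro!: mult_pos_pos)
    then show ?thesis using L1[OF g] by simp
  qed
  have nn: "0 \<le> a\<^sup>2 * P / D + g powr p / (P * D)" using Dp P by simp
  show ?thesis using Phi_split[OF g P] t1 t2 nn unfolding D_def M_def by simp
qed

lemma T1_lip:
  assumes g: "g \<ge> 0" and P1: "P1 \<ge> 1" and P2: "P2 \<ge> 1"
  shows "\<bar>a\<^sup>2 * P1 / (al * g + b * P1) - a\<^sup>2 * P2 / (al * g + b * P2)\<bar> \<le> a\<^sup>2 / b * \<bar>P1 - P2\<bar>"
proof -
  define D1 where "D1 = al * g + b * P1"
  define D2 where "D2 = al * g + b * P2"
  have D1g: "D1 \<ge> al * g" unfolding D1_def using b0 P1 by simp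
  have alg: "al * g \<ge> 0" using al0 g by simp
  have "b * 1 \<le> b * P2" using b0 P2 by (intro mult_left_mono) auto
  then have D2b: "D2 \<ge> b" unfolding D2_def using alg by linarith
  have "b * P1 > 0" using b0 P1 by simp
  then have D1p: "D1 > 0" unfolding D1_def using alg by linarith
  have D2p: "D2 > 0" using D2b b0 by simp
  have n: "a\<^sup>2 * P1 * D2 - a\<^sup>2 * P2 * D1 = a\<^sup>2 * (al * g) * (P1 - P2)"
    unfolding D1_def D2_def by algebra
  have eq: "a\<^sup>2 * P1 / D1 - a\<^sup>2 * P2 / D2 = a\<^sup>2 * (al * g) * (P1 - P2) / (D1 * D2)"
    using diff_frac_eq[of D1 D2 "a\<^sup>2 * P1" "a\<^sup>2 * P2"] D1p D2p n by simp
  have "al * g * b \<le> D1 * D2"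
    using D1g D2b al0 g b0 D1p by (intro mult_mono) auto
  then have q: "al * g / (D1 * D2) \<le> 1 / b"
    using D1p D2p b0 by (simp add: divide_simps mult.commute)
  have "a\<^sup>2 * (al * g) * \<bar>P1 - P2\<bar> / (D1 * D2) = (a\<^sup>2 * \<bar>P1 - P2\<bar>) * (al * g / (D1 * D2))"
    by simp
  also have "\<dots> \<le> (a\<^sup>2 * \<bar>P1 - P2\<bar>) * (1 / b)"
    using q by (intro mult_left_mono) auto
  finally have "a\<^sup>2 * (al * g) * \<bar>P1 - P2\<bar> / (D1 * D2) \<le> a\<^sup>2 / b * \<bar>P1 - P2\<bar>"
    by simp
  moreover have "\<bar>a\<^sup>2 * (al * g) * (P1 - P2) / (D1 * D2)\<bar> = a\<^sup>2 * (al * g) * \<bar>P1 - P2\<bar> / (D1 * D2)"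
    using D1p D2p al0 g by (simp add: abs_mult abs_divide)
  ultimately show ?thesis using eq unfolding D1_def D2_def by simp
qed

lemma T2_lip:
  assumes g: "g \<ge> 0" and P1: "P1 \<ge> 1" and P2: "P2 \<ge> 1"
  shows "\<bar>g powr p / (P1 * (al * g + b * P1)) - g powr p / (P2 * (al * g + b * P2))\<bar> \<le> 2 * N * \<bar>P1 - P2\<bar>"
proof -
  define D1 where "D1 = al * g + b * P1"
  define D2 where "D2 = al * g + b * P2"
  define m where "m = al * g + b"
  define E where "E = g powr p"
  have E0: "E \<ge> 0" unfolding E_def by simp
  have "al * g \<ge> 0" using al0 g by simp
  then have m0: "m > 0" unfolding m_def using b0 by linarith
  have D1m: "D1 \<ge> m" unfolding D1_def m_def using b0 P1 by simp
  have D2m: "D2 \<ge> m" unfolding D2_def m_def using b0 P2 by simp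
  have D1p: "D1 > 0" using D1m m0 by simp
  have D2p: "D2 > 0" using D2m m0 by simp
  have n: "E * (P2 * D2) - E * (P1 * D1) = E * (P2 - P1) * (al * g + b * (P1 + P2))"
    unfolding D1_def D2_def by algebra
  have d: "(P1 * D1) * (P2 * D2) = P1 * P2 * D1 * D2" by (simp add: ac_simps)
  have eq: "E / (P1 * D1) - E / (P2 * D2) = E * (P2 - P1) * (al * g + b * (P1 + P2)) / (P1 * P2 * D1 * D2)"
    using diff_frac_eq[of "P1 * D1" "P2 * D2" E E] D1p D2p P1 P2 n d by simp
  have num: "0 \<le> al * g + b * (P1 + P2)" "al * g + b * (P1 + P2) \<le> D1 + D2"
    unfolding D1_def D2_def using al0 g b0 P1 P2 by (auto simp: algebra_simps)
  have "1 * 1 \<le> P1 * P2" using P1 P2 by (intro mult_mono) auto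
  then have PP: "P1 * P2 \<ge> 1" by simp
  have key: "(D1 + D2) * m \<le> 2 * (P1 * P2 * D1 * D2)"
  proof -
    have "(D1 + D2) * m = D1 * m + D2 * m" by (simp add: algebra_simps)
    also have "\<dots> \<le> D1 * D2 + D2 * D1"
      using D1m D2m D1p D2p m0 by (intro add_mono mult_left_mono) auto
    also have "\<dots> = 2 * (D1 * D2)" by simp
    also have "\<dots> \<le> 2 * (P1 * P2 * (D1 * D2))"
    proof -
      have "1 * (D1 * D2) \<le> P1 * P2 * (D1 * D2)"
        using mult_right_mono[OF PP, of "D1 * D2"] D1p D2p by simp
      then show ?thesis by simp
    qed
    finally show ?thesis by (simp add: mult.assoc)
  qed
  have den: "P1 * P2 * D1 * D2 > 0" using P1 P2 D1p D2p by simp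
  have "\<bar>E * (P2 - P1) * (al * g + b * (P1 + P2)) / (P1 * P2 * D1 * D2)\<bar>
        = E * \<bar>P1 - P2\<bar> * (al * g + b * (P1 + P2)) / (P1 * P2 * D1 * D2)"
    using E0 num den P1 P2 D1p D2p by (simp add: abs_mult abs_divide abs_minus_commute)
  also have "\<dots> \<le> E * \<bar>P1 - P2\<bar> * (D1 + D2) / (P1 * P2 * D1 * D2)"
    using E0 num den by (intro divide_right_mono mult_left_mono) auto
  also have "\<dots> \<le> E * \<bar>P1 - P2\<bar> * (2 / m)"
  proof -
    have "(D1 + D2) / (P1 * P2 * D1 * D2) \<le> 2 / m"
      using key den m0 by (simp add: divide_simps)
    then have "E * \<bar>P1 - P2\<bar> * ((D1 + D2) / (P1 * P2 * D1 * D2)) \<le> E * \<bar>P1 - P2\<bar> * (2 / m)"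
      using E0 by (intro mult_left_mono) auto
    then show ?thesis by simp
  qed
  also have "\<dots> = 2 * (E / m) * \<bar>P1 - P2\<bar>" by simp
  also have "\<dots> \<le> 2 * N * \<bar>P1 - P2\<bar>"
    using L1[OF g] unfolding E_def m_def by (intro mult_right_mono) auto
  finally show ?thesis using eq unfolding D1_def D2_def E_def by simp
qed

lemma Phi_lip:
  assumes g: "g \<ge> 0" and P1: "P1 \<ge> 1" and P2: "P2 \<ge> 1"
  shows "\<bar>Phi g P1 - Phi g P2\<bar> \<le> Kc * \<bar>P1 - P2\<bar>"
proof -
  let ?x = "a\<^sup>2 * P1 / (al * g + b * P1) - a\<^sup>2 * P2 / (al * g + b * P2)"
  let ?y = "g powr p / (P1 * (al * g + b * P1)) - g powr p / (P2 * (al * g + b * P2))"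
  have "Phi g P1 - Phi g P2 = ?x + ?y"
    using Phi_split[OF g P1] Phi_split[OF g P2] by simp
  then have "\<bar>Phi g P1 - Phi g P2\<bar> \<le> \<bar>?x\<bar> + \<bar>?y\<bar>" by (simp add: abs_triangle_ineq)
  then have "\<bar>Phi g P1 - Phi g P2\<bar> \<le> a\<^sup>2 / b * \<bar>P1 - P2\<bar> + 2 * N * \<bar>P1 - P2\<bar>"
    using T1_lip[OF assms] T2_lip[OF assms] by linarith
  then show ?thesis unfolding Kc_def by (simp add: algebra_simps)
qed

lemma phi_bound: "0 \<le> phi g P \<and> phi g P \<le> M"
  unfolding phi_def by (rule Phi_bound) auto

lemma phi_lip: "\<bar>phi g P1 - phi g P2\<bar> \<le> Kc * \<bar>P1 - P2\<bar>"
proof -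
  have "\<bar>phi g P1 - phi g P2\<bar> \<le> Kc * \<bar>max P1 1 - max P2 1\<bar>"
    unfolding phi_def by (rule Phi_lip) auto
  also have "\<dots> \<le> Kc * \<bar>P1 - P2\<bar>" using Kc0 by (intro mult_left_mono) auto
  finally show ?thesis .
qed

lemma phi_abs: "\<bar>phi g P\<bar> \<le> M"
  using phi_bound[of g P] by auto

lemma phi_eq: "g \<ge> 0 \<Longrightarrow> P \<ge> 1 \<Longrightarrow> phi g P = Phi g P"
  unfolding phi_def by simp

lemma phi_cont:
  assumes "continuous_on S k"
  shows "continuous_on S (\<lambda>h. phi h (k h))"
proof -
  have c1: "continuous_on S (\<lambda>h. max h 0 powr p)"
    using p0 by (intro continuous_on_powr' continuous_intros) auto
  have den: "max (k h) 1 * (al * max h 0 + b * max (k h) 1) \<noteq> 0" for h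
  proof -
    have "al * max h 0 \<ge> 0" using al0 by simp
    moreover have "b * max (k h) 1 > 0" using b0 by simp
    ultimately have "al * max h 0 + b * max (k h) 1 > 0" by linarith
    moreover have "max (k h) 1 > 0" by simp
    ultimately show ?thesis by simp
  qed
  show ?thesis unfolding phi_def Phi_def
    by (intro continuous_intros c1 assms) (use den in auto)
qed

end

context ode begin

definition L where "L = 2 * Kc"
lemma L0: "L > 0" unfolding L_def using Kc0 by simp

lemma int_cont:
  assumes f: "continuous_on UNIV f"
  shows "continuous_on UNIV (\<lambda>g. integral {0..max g 0} (f :: real \<Rightarrow> real))"
proof -
  have "isCont (\<lambda>g. integral {0..max g 0} f) x" for x
  proof -
    define B where "B = \<bar>x\<bar> + 1"
    have c1: "continuous_on {0..B} (\<lambda>y. integral {0..y} f)"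
      by (intro indefinite_integral_continuous_1 integrable_continuous_real continuous_on_subset[OF f]) auto
    have "continuous_on {..<B} (\<lambda>g. integral {0..max g 0} f)"
      by (rule continuous_on_compose2[OF c1]) (auto intro!: continuous_intros simp: B_def)
    moreover have "x \<in> {..<B}" unfolding B_def by auto
    ultimately show ?thesis using continuous_on_eq_continuous_at[of "{..<B}"] by auto
  qed
  then show ?thesis by (simp add: continuous_at_imp_continuous_on)
qed

lemma int_bound:
  assumes f: "continuous_on UNIV f" and B: "\<And>h. \<bar>f h\<bar> \<le> B" and x: "x \<ge> 0"
  shows "\<bar>integral {0..x} (f :: real \<Rightarrow> real)\<bar> \<le> B * x"
proof -
  have "norm (integral {0..x} f) \<le> integral {0..x} (\<lambda>_. B)"
    by (rule integral_norm_bound_integral)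
       (auto intro!: integrable_continuous_real continuous_on_subset[OF f] B)
  then show ?thesis using x by (simp add: mult.commute)
qed

lemma exp_x_bound: assumes "x \<ge> 0" shows "exp (- L * x) * x \<le> 1 / L"
proof -
  have "1 + L * x \<le> exp (L * x)" by (rule exp_ge_add_one_self)
  then have "L * x \<le> exp (L * x)" by linarith
  then have "x \<le> exp (L * x) / L" using L0 by (simp add: field_simps)
  then have "exp (- L * x) * x \<le> exp (- L * x) * (exp (L * x) / L)"
    by (intro mult_left_mono) auto
  also have "\<dots> = 1 / L" by (simp add: exp_minus field_simps)
  finally show ?thesis .
qed

definition fw :: "(real \<Rightarrow>\<^sub>C real) \<Rightarrow> real \<Rightarrow> real" where
  "fw w = (\<lambda>h. phi h (exp (L * h) * w h))"

lemma fw_cont: "continuous_on UNIV (fw w)"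
  unfolding fw_def by (intro phi_cont continuous_intros) auto

lemma fw_bound: "\<bar>fw w h\<bar> \<le> M"
  using phi_bound[of h "exp (L * h) * w h"] unfolding fw_def by auto

definition Top :: "(real \<Rightarrow>\<^sub>C real) \<Rightarrow> real \<Rightarrow> real" where
  "Top w = (\<lambda>g. exp (- L * max g 0) * (1 + integral {0..max g 0} (fw w)))"

lemma Top_bcontfun: "Top w \<in> bcontfun"
proof (rule bcontfun_normI)
  show "continuous_on UNIV (Top w)"
    unfolding Top_def by (intro continuous_intros int_cont fw_cont)
  fix g :: real
  define x where "x = max g 0"
  have x0: "x \<ge> 0" unfolding x_def by simp
  have "\<bar>Top w g\<bar> = exp (- L * x) * \<bar>1 + integral {0..x} (fw w)\<bar>"
    unfolding Top_def x_def by (simp add: abs_mult)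
  also have "\<dots> \<le> exp (- L * x) * (1 + M * x)"
  proof -
    have ib: "\<bar>integral {0..x} (fw w)\<bar> \<le> M * x" by (rule int_bound[OF fw_cont fw_bound x0])
    have "\<bar>1 + integral {0..x} (fw w)\<bar> \<le> 1 + M * x" using ib by (auto simp: abs_le_iff)
    then show ?thesis by (intro mult_left_mono) auto
  qed
  also have "\<dots> = exp (- L * x) + M * (exp (- L * x) * x)" by (simp add: algebra_simps)
  also have "\<dots> \<le> 1 + M * (1 / L)"
    using exp_x_bound[OF x0] M0 L0 x0 by (intro add_mono mult_left_mono) auto
  finally show "norm (Top w g) \<le> 1 + M * (1 / L)" by simp
qed

definition TT :: "(real \<Rightarrow>\<^sub>C real) \<Rightarrow> (real \<Rightarrow>\<^sub>C real)" where
  "TT w = Bcontfun (Top w)"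

lemma TT_apply: "apply_bcontfun (TT w) g = Top w g"
  unfolding TT_def using Bcontfun_inverse[OF Top_bcontfun] by simp

lemma exp_int: assumes "x \<ge> 0"
  shows "((\<lambda>h. c * exp (L * h)) has_integral (c * exp (L * x) / L - c / L)) {0..x}"
proof -
  have "((\<lambda>h. c * exp (L * h)) has_integral ((\<lambda>h. c * exp (L * h) / L) x - (\<lambda>h. c * exp (L * h) / L) 0)) {0..x}"
  proof (rule fundamental_theorem_of_calculus[OF assms])
    fix h assume "h \<in> {0..x}"
    have "((\<lambda>h. c * exp (L * h) / L) has_real_derivative c * (exp (L * h) * (L * 1)) / L) (at h within {0..x})"
      using L0 by (intro derivative_eq_intros) auto
    then show "((\<lambda>h. c * exp (L * h) / L) has_vector_derivative c * exp (L * h)) (at h within {0..x})"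
      using L0 by (simp add: has_real_derivative_iff_has_vector_derivative[symmetric])
  qed
  then show ?thesis using L0 by simp
qed

lemma TT_contr: "dist (TT w1) (TT w2) \<le> 1 / 2 * dist w1 w2"
proof (rule dist_bound)
  fix g :: real
  define x where "x = max g 0"
  define d where "d = dist w1 w2"
  have x0: "x \<ge> 0" unfolding x_def by simp
  have d0: "d \<ge> 0" unfolding d_def by simp
  have pt: "\<bar>fw w1 h - fw w2 h\<bar> \<le> Kc * d * exp (L * h)" for h
  proof -
    have "\<bar>fw w1 h - fw w2 h\<bar> \<le> Kc * \<bar>exp (L * h) * w1 h - exp (L * h) * w2 h\<bar>"
      unfolding fw_def by (rule phi_lip)
    also have "\<dots> = Kc * exp (L * h) * \<bar>w1 h - w2 h\<bar>"
      by (simp add: right_diff_distrib[symmetric] abs_mult)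
    also have "\<dots> \<le> Kc * exp (L * h) * d"
      using dist_bounded[of w1 h w2] Kc0 unfolding d_def dist_real_def by (intro mult_left_mono) auto
    finally show ?thesis by (simp add: ac_simps)
  qed
  have i1: "fw w1 integrable_on {0..x}" "fw w2 integrable_on {0..x}"
    by (auto intro!: integrable_continuous_real continuous_on_subset[OF fw_cont])
  have "\<bar>integral {0..x} (fw w1) - integral {0..x} (fw w2)\<bar> = norm (integral {0..x} (\<lambda>h. fw w1 h - fw w2 h))"
    using integral_diff[OF i1] by simp
  also have "\<dots> \<le> integral {0..x} (\<lambda>h. Kc * d * exp (L * h))"
    using pt by (intro integral_norm_bound_integral integrable_diff i1) (auto intro!: integrable_continuous_real continuous_intros)
  also have "\<dots> = Kc * d * exp (L * x) / L - Kc * d / L"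
    by (rule integral_unique[OF exp_int[OF x0]])
  finally have ib: "\<bar>integral {0..x} (fw w1) - integral {0..x} (fw w2)\<bar> \<le> Kc * d * exp (L * x) / L - Kc * d / L" .
  have "dist (TT w1 g) (TT w2 g) = exp (- L * x) * \<bar>integral {0..x} (fw w1) - integral {0..x} (fw w2)\<bar>"
    unfolding TT_apply Top_def dist_real_def x_def
    by (simp add: abs_mult right_diff_distrib[symmetric])
  also have "\<dots> \<le> exp (- L * x) * (Kc * d * exp (L * x) / L - Kc * d / L)"
    using ib by (intro mult_left_mono) auto
  also have "\<dots> = Kc * d / L - exp (- L * x) * (Kc * d / L)"
    by (simp add: algebra_simps exp_minus field_simps)
  also have "\<dots> \<le> Kc * d / L"
    using Kc0 d0 L0 by (simp add: divide_nonneg_pos)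
  also have "\<dots> = 1 / 2 * d" unfolding L_def using Kc0 by simp
  finally show "dist (TT w1 g) (TT w2 g) \<le> 1 / 2 * dist w1 w2" unfolding d_def .
qed

lemma TT_fix: "\<exists>w. TT w = w"
  using banach_fix_type[of "1/2" TT] TT_contr by auto

end


locale ode2 = ode +
  fixes w :: "real \<Rightarrow>\<^sub>C real"
  assumes wfix: "TT w = w"
begin

definition P where "P g = exp (L * g) * w g"

lemma fwP: "fw w = (\<lambda>h. phi h (P h))"
  unfolding fw_def P_def by simp

lemma fP_cont: "continuous_on UNIV (\<lambda>h. phi h (P h))"
  using fw_cont[of w] unfolding fwP .

lemma P_eq: assumes g: "g \<ge> 0" shows "P g = 1 + integral {0..g} (\<lambda>h. phi h (P h))"
proof -
  have "w g = exp (- L * g) * (1 + integral {0..g} (fw w))"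
    using TT_apply[of w g] wfix g unfolding Top_def by simp
  then show ?thesis unfolding P_def fwP by (simp add: exp_minus field_simps)
qed

lemma P_cont: "continuous_on UNIV P"
  unfolding P_def by (intro continuous_intros) auto

lemma P_ge1: assumes "g \<ge> 0" shows "P g \<ge> 1"
proof -
  have "0 \<le> integral {0..g} (\<lambda>h. phi h (P h))"
    using phi_bound by (intro integral_nonneg integrable_continuous_real continuous_on_subset[OF fP_cont]) auto
  then show ?thesis using P_eq[OF assms] by simp
qed

lemma P_le: assumes "g \<ge> 0" shows "P g \<le> 1 + M * g"
proof -
  have "\<bar>integral {0..g} (\<lambda>h. phi h (P h))\<bar> \<le> M * g"
    by (rule int_bound[OF fP_cont phi_abs assms])
  then show ?thesis using P_eq[OF assms] by simp
qed

lemma P_deriv: assumes g: "g > 0" shows "(P has_real_derivative Phi g (P g)) (at g)"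
proof -
  have "((\<lambda>x. integral {0..x} (\<lambda>h. phi h (P h))) has_real_derivative phi g (P g)) (at g within {0..g+1})"
    using g by (intro integral_has_real_derivative continuous_on_subset[OF fP_cont]) auto
  then have "((\<lambda>x. integral {0..x} (\<lambda>h. phi h (P h))) has_real_derivative phi g (P g)) (at g)"
    using g at_within_interior[of g "{0..g+1}"] by simp
  then have "((\<lambda>x. 1 + integral {0..x} (\<lambda>h. phi h (P h))) has_real_derivative phi g (P g)) (at g)"
    using DERIV_add[OF DERIV_const] by fastforce
  then have "(P has_real_derivative phi g (P g)) (at g)"
    by (rule has_field_derivative_transform_within_open[where S="{0<..}"]) (use g P_eq in auto)
  then show ?thesis using phi_eq[of g "P g"] P_ge1[of g] g by simp
qed

definition Tm where "Tm g = integral {0..g} (\<lambda>h. 1 / P h)"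

lemma invP_cont: "continuous_on {0..B} (\<lambda>h. 1 / P h)"
proof -
  have nz: "\<forall>x\<in>{0..B}. P x \<noteq> 0"
  proof
    fix x assume "x \<in> {0..B}"
    then have "P x \<ge> 1" using P_ge1 by simp
    then show "P x \<noteq> 0" by linarith
  qed
  show ?thesis
    by (intro continuous_on_divide continuous_on_const continuous_on_subset[OF P_cont] nz) auto
qed

lemma Tm_cont: "continuous_on {0..B} Tm"
  unfolding Tm_def[abs_def]
  by (intro indefinite_integral_continuous_1 integrable_continuous_real invP_cont)

lemma Tm_deriv: assumes g: "g > 0" shows "(Tm has_real_derivative 1 / P g) (at g)"
proof -
  have "(Tm has_real_derivative 1 / P g) (at g within {0..g+1})"
    unfolding Tm_def[abs_def] using g by (intro integral_has_real_derivative invP_cont) auto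
  then show ?thesis using g at_within_interior[of g "{0..g+1}"] by simp
qed

lemma Tm0: "Tm 0 = 0" unfolding Tm_def by simp

lemma Tm_strict: assumes "0 \<le> g1" "g1 < g2" shows "Tm g1 < Tm g2"
proof (rule DERIV_pos_imp_increasing_open[OF assms(2)])
  fix x assume "g1 < x" "x < g2"
  then have x: "x > 0" using assms by simp
  show "\<exists>y. (Tm has_real_derivative y) (at x) \<and> 0 < y"
    using Tm_deriv[OF x] P_ge1[of x] x by (intro exI[of _ "1 / P x"]) auto
next
  show "continuous_on {g1..g2} Tm"
    by (rule continuous_on_subset[OF Tm_cont[of g2]]) (use assms in auto)
qed

lemma Tm_mono: "0 \<le> g1 \<Longrightarrow> g1 \<le> g2 \<Longrightarrow> Tm g1 \<le> Tm g2"
  using Tm_strict by (cases "g1 = g2") (auto simp: order.order_iff_strict)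

lemma Tm_inj: "0 \<le> g1 \<Longrightarrow> 0 \<le> g2 \<Longrightarrow> Tm g1 = Tm g2 \<Longrightarrow> g1 = g2"
  using Tm_strict by (metis linorder_neq_iff order_less_irrefl)

lemma Tm_lower: assumes g: "g \<ge> 0" shows "ln (1 + M * g) / M \<le> Tm g"
proof -
  define \<Psi> where "\<Psi> x = Tm x - ln (1 + M * x) / M" for x
  have dl: "((\<lambda>x. ln (1 + M * x) / M) has_real_derivative 1 / (1 + M * x)) (at x)" if "x \<ge> 0" for x
  proof -
    have "M * x \<ge> 0" using M0 that by simp
    then have pos: "1 + M * x > 0" by linarith
    have Mne: "M \<noteq> 0" using M0 by simp
    have d: "((\<lambda>x. 1 + M * x) has_real_derivative 0 + M * 1) (at x)"
      by (rule DERIV_add[OF DERIV_const DERIV_cmult[OF DERIV_ident]])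
    have "((\<lambda>x. ln (1 + M * x)) has_real_derivative 1 / (1 + M * x) * (0 + M * 1)) (at x)"
      by (rule DERIV_chain2[where g="\<lambda>x. 1 + M * x", OF DERIV_ln_divide[OF pos] d])
    then have "((\<lambda>x. ln (1 + M * x) / M) has_real_derivative 1 / (1 + M * x) * (0 + M * 1) / M) (at x)"
      by (rule DERIV_cdivide)
    then show ?thesis using Mne by simp
  qed
  have "\<Psi> 0 \<le> \<Psi> g"
  proof (rule DERIV_nonneg_imp_increasing_open[OF g])
    fix x assume x: "0 < x" "x < g"
    have "1 / (1 + M * x) \<le> 1 / P x"
      using P_le[of x] P_ge1[of x] x by (intro divide_left_mono) auto
    then show "\<exists>y. (\<Psi> has_real_derivative y) (at x) \<and> 0 \<le> y"
      unfolding \<Psi>_def[abs_def] using DERIV_diff[OF Tm_deriv dl] x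
      by (intro exI[of _ "1 / P x - 1 / (1 + M * x)"]) auto
  next
    have pos': "\<forall>x\<in>{0..g}. 0 < 1 + M * x"
    proof
      fix x assume "x \<in> {0..g}"
      then have "M * x \<ge> 0" using M0 by simp
      then show "0 < 1 + M * x" by linarith
    qed
    have "continuous_on {0..g} (\<lambda>x. ln (1 + M * x) / M)"
      using M0 pos' by (intro continuous_intros) auto
    then show "continuous_on {0..g} \<Psi>"
      unfolding \<Psi>_def[abs_def] by (rule continuous_on_diff[OF Tm_cont])
  qed
  then show ?thesis unfolding \<Psi>_def using Tm0 by simp
qed

lemma Tm_surj: assumes t: "t \<ge> 0" shows "\<exists>g\<ge>0. Tm g = t"
proof -
  define B where "B = (exp (M * t) - 1) / M"
  have B0: "B \<ge> 0" unfolding B_def using M0 t by simp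
  have "ln (1 + M * B) / M = t" unfolding B_def using M0 by simp
  then have "t \<le> Tm B" using Tm_lower[OF B0] by simp
  then obtain g where "0 \<le> g" "g \<le> B" "Tm g = t"
    using IVT'[of Tm 0 t B] Tm0 t B0 Tm_cont[of B] by auto
  then show ?thesis by blast
qed

definition Gi where "Gi t = (THE g. 0 \<le> g \<and> Tm g = t)"

lemma Gi_prop: assumes "t \<ge> 0" shows "0 \<le> Gi t \<and> Tm (Gi t) = t"
proof -
  have "\<exists>!g. 0 \<le> g \<and> Tm g = t" using Tm_surj[OF assms] Tm_inj by blast
  then show ?thesis unfolding Gi_def by (rule theI')
qed

lemma Gi_Tm: "g \<ge> 0 \<Longrightarrow> Gi (Tm g) = g"
  unfolding Gi_def using Tm_inj by (intro the_equality) auto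

lemma Gi0: "Gi 0 = 0" using Gi_Tm[of 0] Tm0 by simp

lemma Gi_pos: assumes "t > 0" shows "Gi t > 0"
proof -
  have "Gi t \<noteq> 0" using Gi_prop[of t] assms Tm0 by force
  then show ?thesis using Gi_prop[of t] assms by simp
qed

lemma Tm_nonneg: "g \<ge> 0 \<Longrightarrow> Tm g \<ge> 0"
  using Tm_mono[of 0 g] Tm0 by simp

lemma Tm_image: assumes "B \<ge> 0" shows "Tm ` {0..B} = {0..Tm B}"
proof
  show "Tm ` {0..B} \<subseteq> {0..Tm B}" using Tm_nonneg Tm_mono by auto
  show "{0..Tm B} \<subseteq> Tm ` {0..B}"
  proof
    fix t assume t: "t \<in> {0..Tm B}"
    then obtain g where "0 \<le> g" "g \<le> B" "Tm g = t"
      using IVT'[of Tm 0 t B] Tm0 assms Tm_cont[of B] by auto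
    then show "t \<in> Tm ` {0..B}" by auto
  qed
qed

lemma Gi_cont_on: assumes "B \<ge> 0" shows "continuous_on {0..Tm B} Gi"
proof -
  have "continuous_on (Tm ` {0..B}) Gi"
    using Gi_Tm by (intro continuous_on_inv Tm_cont compact_Icc) auto
  then show ?thesis using Tm_image[OF assms] by simp
qed

lemma Gi_cont_on': assumes "t \<ge> 0" shows "continuous_on {0..t + 1} Gi"
  using Gi_cont_on[of "Gi (t + 1)"] Gi_prop[of "t + 1"] assms by simp

lemma Gi_cont: "continuous_on {0..} Gi"
  unfolding continuous_on_eq_continuous_within
proof
  fix t :: real assume t: "t \<in> {0..}"
  have c: "continuous_on {0..t + 1} Gi" using Gi_cont_on'[of t] t by simp
  have "continuous (at t within {0..t + 1}) Gi"
    using bspec[OF c[unfolded continuous_on_eq_continuous_within], of t] t by simp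
  moreover have "at t within {0..} = at t within {0..t + 1}"
    by (rule at_within_nhd[of t "{..<t+1}"]) auto
  ultimately show "continuous (at t within {0..}) Gi" by simp
qed

lemma Gi_isCont: assumes "t > 0" shows "isCont Gi t"
proof -
  have c: "continuous_on {0..t + 1} Gi" using Gi_cont_on'[of t] assms by simp
  have "continuous (at t within {0..t + 1}) Gi"
    using bspec[OF c[unfolded continuous_on_eq_continuous_within], of t] assms by simp
  then show ?thesis using assms at_within_interior[of t "{0..t+1}"] by simp
qed

lemma Gi_deriv: assumes t: "t > 0" shows "(Gi has_real_derivative P (Gi t)) (at t)"
proof -
  have "(Gi has_real_derivative inverse (1 / P (Gi t))) (at t)"
  proof (rule DERIV_inverse_function[where f=Tm and a=0 and b="t+1"])
    show "(Tm has_real_derivative 1 / P (Gi t)) (at (Gi t))" using Tm_deriv[OF Gi_pos[OF t]] .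
    show "1 / P (Gi t) \<noteq> 0" using P_ge1[of "Gi t"] Gi_pos[OF t] by simp
    show "0 < t" "t < t + 1" using t by auto
    show "\<And>y. 0 < y \<Longrightarrow> y < t + 1 \<Longrightarrow> Tm (Gi y) = y" using Gi_prop by simp
    show "isCont Gi t" using Gi_isCont[OF t] .
  qed
  then show ?thesis by simp
qed

definition Qi where "Qi t = P (Gi t)"

lemma Qi_pos: assumes "t > 0" shows "Qi t > 0"
proof -
  have "P (Gi t) \<ge> 1" using P_ge1 Gi_pos[OF assms] by (simp add: less_imp_le)
  then show ?thesis unfolding Qi_def by linarith
qed

lemma Qi_deriv: assumes t: "t > 0"
  shows "(Qi has_real_derivative (a\<^sup>2 * (Qi t)\<^sup>2 + Gi t powr p) / (al * Gi t + b * Qi t)) (at t)"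
proof -
  have "(Qi has_real_derivative Phi (Gi t) (P (Gi t)) * P (Gi t)) (at t)"
    unfolding Qi_def[abs_def] using DERIV_chain2[OF P_deriv[OF Gi_pos[OF t]] Gi_deriv[OF t]] by simp
  moreover have "Phi (Gi t) (P (Gi t)) * P (Gi t) = (a\<^sup>2 * (Qi t)\<^sup>2 + Gi t powr p) / (al * Gi t + b * Qi t)"
    using P_ge1[of "Gi t"] Gi_pos[OF t] unfolding Phi_def Qi_def by simp
  ultimately show ?thesis by simp
qed

end



locale sol =
  fixes a \<beta> p :: real and G Q :: "real \<Rightarrow> real"
  assumes a1: "a > 1" and bneg: "\<beta> < 0" and p0: "0 < p"
    and ap: "a * p = 2 * a - 2"
    and G0: "G 0 = 0" and Gcont: "continuous_on {0..} G"
    and Gpos: "\<And>t. t > 0 \<Longrightarrow> G t > 0"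
    and Qpos: "\<And>t. t > 0 \<Longrightarrow> Q t > 0"
    and dG: "\<And>t. t > 0 \<Longrightarrow> (G has_real_derivative Q t) (at t)"
    and dQ: "\<And>t. t > 0 \<Longrightarrow> (Q has_real_derivative
        (a\<^sup>2 * (Q t)\<^sup>2 + G t powr p) / (a * (a - 1) * G t - \<beta> * Q t)) (at t)"
begin

definition D where "D t = a * (a - 1) * G t - \<beta> * Q t"
definition F where "F t = (a\<^sup>2 * (Q t)\<^sup>2 + G t powr p) / D t"

lemma Dpos: "t > 0 \<Longrightarrow> D t > 0"
proof -
  assume t: "t > 0"
  have "a * (a - 1) > 0" using a1 by simp
  then have "a * (a - 1) * G t > 0" using Gpos[OF t] by simp
  moreover have "- \<beta> * Q t > 0" using bneg Qpos[OF t] by (simp add: mult_neg_pos)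
  ultimately show "D t > 0" unfolding D_def by simp
qed

lemma dQ': "t > 0 \<Longrightarrow> (Q has_real_derivative F t) (at t)"
  using dQ unfolding F_def D_def by auto

lemma FD: "t > 0 \<Longrightarrow> F t * D t = a\<^sup>2 * (Q t)\<^sup>2 + G t powr p"
  using Dpos[of t] unfolding F_def by auto

lemma Fpos: assumes "t > 0" shows "F t > 0"
proof -
  have "0 < a\<^sup>2 * (Q t)\<^sup>2 + G t powr p"
    using Qpos[OF assms] a1 by (intro add_pos_nonneg) auto
  then show ?thesis using Dpos[OF assms] unfolding F_def by simp
qed

inductive_set A :: "(real \<Rightarrow> real) set" where
  A_const: "(\<lambda>t. c) \<in> A"
| A_G: "G \<in> A"
| A_Q: "Q \<in> A"
| A_pow: "(\<lambda>t. G t powr r) \<in> A"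
| A_invD: "(\<lambda>t. 1 / D t) \<in> A"
| A_add: "f \<in> A \<Longrightarrow> g \<in> A \<Longrightarrow> (\<lambda>t. f t + g t) \<in> A"
| A_mult: "f \<in> A \<Longrightarrow> g \<in> A \<Longrightarrow> (\<lambda>t. f t * g t) \<in> A"

lemma A_diff: assumes "f \<in> A" "g \<in> A" shows "(\<lambda>t. f t - g t) \<in> A"
proof -
  have "(\<lambda>t. f t + (-1) * g t) \<in> A" using assms by (intro A_add A_mult A_const)
  then show ?thesis by simp
qed

lemma F_A: "(\<lambda>t. (a\<^sup>2 * Q t * Q t + G t powr p) * (1 / D t)) \<in> A"
  by (intro A_mult A_add A_const A_invD A_pow A_Q)

lemma F_eq: "F t = (a\<^sup>2 * Q t * Q t + G t powr p) * (1 / D t)"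
  unfolding F_def by (simp add: power2_eq_square)

lemma A_deriv: "f \<in> A \<Longrightarrow> \<exists>f'\<in>A. \<forall>t>0. (f has_real_derivative f' t) (at t)"
proof (induction rule: A.induct)
  case (A_const c)
  show ?case by (rule bexI[of _ "\<lambda>t. 0"]) (auto intro: A.intros)
next
  case A_G
  show ?case using dG by (intro bexI[of _ Q]) (auto intro: A.intros)
next
  case A_Q
  show ?case using dQ' F_A F_eq
    by (intro bexI[of _ "\<lambda>t. (a\<^sup>2 * Q t * Q t + G t powr p) * (1 / D t)"]) auto
next
  case (A_pow r)
  have dpw: "\<forall>t>0. ((\<lambda>t. G t powr r) has_real_derivative (\<lambda>t. r * G t powr (r - 1) * Q t) t) (at t)"
  proof (intro allI impI)
    fix t :: real assume t: "t > 0"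
    have "((\<lambda>t. G t powr r) has_real_derivative (r * G t powr (r - 1)) * Q t) (at t)"
      using DERIV_chain2[OF has_real_derivative_powr[OF Gpos[OF t]] dG[OF t]] .
    then show "((\<lambda>t. G t powr r) has_real_derivative (\<lambda>t. r * G t powr (r - 1) * Q t) t) (at t)"
      by simp
  qed
  have pw: "(\<lambda>t. G t powr (r - 1)) \<in> A" by (rule A.A_pow)
  moreover have "(\<lambda>t. r * G t powr (r - 1) * Q t) \<in> A" by (intro A_mult A_const A_Q pw)
  ultimately show ?case using dpw by (intro bexI[of _ "\<lambda>t. r * G t powr (r - 1) * Q t"]) auto
next
  case A_invD
  let ?f' = "\<lambda>t. (-1) * (a * (a - 1) * Q t - \<beta> * ((a\<^sup>2 * Q t * Q t + G t powr p) * (1 / D t))) * (1 / D t) * (1 / D t)"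
  have "?f' \<in> A" by (intro A_mult A_add A_diff A_const A.A_invD A.A_pow A_Q F_A)
  moreover have "\<forall>t>0. ((\<lambda>t. 1 / D t) has_real_derivative ?f' t) (at t)"
  proof (intro allI impI)
    fix t :: real assume t: "t > 0"
    have dD: "(D has_real_derivative (a * (a - 1) * Q t - \<beta> * F t)) (at t)"
      unfolding D_def[abs_def]
      using DERIV_diff[OF DERIV_cmult[OF dG[OF t]] DERIV_cmult[OF dQ'[OF t]]] by simp
    have Dnz: "D t \<noteq> 0" using Dpos[OF t] by simp
    have "((\<lambda>t. inverse (D t)) has_real_derivative ?f' t) (at t)"
      by (rule DERIV_cong[OF DERIV_inverse_fun[OF dD Dnz]])
         (use Dnz in \<open>simp add: F_eq field_simps power2_eq_square\<close>)
    then show "((\<lambda>t. 1 / D t) has_real_derivative ?f' t) (at t)"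
      by (simp add: inverse_eq_divide)
  qed
  ultimately show ?case by (intro bexI[of _ ?f']) auto
next
  case (A_add f g)
  then obtain f' g' where "f' \<in> A" "g' \<in> A" "\<forall>t>0. (f has_real_derivative f' t) (at t)"
     "\<forall>t>0. (g has_real_derivative g' t) (at t)" by blast
  then show ?case
    by (intro bexI[of _ "\<lambda>t. f' t + g' t"]) (auto intro: A.intros derivative_intros)
next
  case (A_mult f g)
  then obtain f' g' where "f' \<in> A" "g' \<in> A" "\<forall>t>0. (f has_real_derivative f' t) (at t)"
     "\<forall>t>0. (g has_real_derivative g' t) (at t)" by blast
  note h = this
  have fg: "f \<in> A" "g \<in> A" using A_mult.hyps by auto
  have m: "(\<lambda>t. f' t * g t + f t * g' t) \<in> A" using h fg by (intro A.A_add A.A_mult) auto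
  have "\<forall>t>0. ((\<lambda>t. f t * g t) has_real_derivative f' t * g t + f t * g' t) (at t)"
  proof (intro allI impI)
    fix t :: real assume t: "t > 0"
    have df: "(f has_real_derivative f' t) (at t)" and dg: "(g has_real_derivative g' t) (at t)"
      using h t by auto
    show "((\<lambda>t. f t * g t) has_real_derivative f' t * g t + f t * g' t) (at t)"
      by (rule DERIV_cong[OF DERIV_mult[OF df dg]]) (simp add: algebra_simps)
  qed
  then show ?case using m by (intro bexI[of _ "\<lambda>t. f' t * g t + f t * g' t"]) auto
qed

end

context sol begin

definition W :: "(real \<times> real) set" where
  "W = {z. 0 < snd z \<and> 0 < fst z + \<beta> * ln (snd z)}"

definition cls :: "real \<Rightarrow> (real \<Rightarrow> real) \<Rightarrow> real \<times> real \<Rightarrow> real" where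
  "cls e h = (\<lambda>z. snd z powr e * h (fst z + \<beta> * ln (snd z)))"

lemma W_open: "open W"
proof -
  have o: "open {z::real\<times>real. 0 < snd z}"
    by (intro open_Collect_less continuous_intros)
  have c: "continuous_on {z::real\<times>real. 0 < snd z} (\<lambda>z. fst z + \<beta> * ln (snd z))"
    by (intro continuous_intros) auto
  have all: "\<forall>B. open B \<longrightarrow> open ((\<lambda>z. fst z + \<beta> * ln (snd z)) -` B \<inter> {z::real\<times>real. 0 < snd z})"
    by (rule iffD1[OF continuous_on_open_vimage[OF o] c])
  have "open ((\<lambda>z. fst z + \<beta> * ln (snd z)) -` {0<..} \<inter> {z::real\<times>real. 0 < snd z})"
    using all[rule_format, OF open_greaterThan] .
  moreover have "W = (\<lambda>z. fst z + \<beta> * ln (snd z)) -` {0<..} \<inter> {z::real\<times>real. 0 < snd z}"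
    unfolding W_def by auto
  ultimately show ?thesis by simp
qed

lemma cls_has_derivative:
  assumes z: "z \<in> W" and hd: "\<And>t. t > 0 \<Longrightarrow> (h has_real_derivative h' t) (at t)"
  shows "(cls e h has_derivative
     (\<lambda>k. cls e h' z * fst k + cls (e - 1) (\<lambda>t. e * h t + \<beta> * h' t) z * snd k)) (at z)"
proof -
  have y: "snd z > 0" and t: "fst z + \<beta> * ln (snd z) > 0" using z unfolding W_def by auto
  have dln: "((\<lambda>z::real\<times>real. ln (snd z)) has_derivative (\<lambda>k. snd k * (1 / snd z))) (at z)"
    using DERIV_compose_FDERIV[where f=ln and g=snd and x=z and s=UNIV, OF DERIV_ln_divide[OF y]
        has_derivative_snd[OF has_derivative_ident]] by simp
  have dt: "((\<lambda>z::real\<times>real. fst z + \<beta> * ln (snd z)) has_derivative (\<lambda>k. fst k + \<beta> * (snd k * (1 / snd z)))) (at z)"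
    by (intro has_derivative_add has_derivative_fst[OF has_derivative_ident] has_derivative_mult_right dln)
  have dh: "((\<lambda>z::real\<times>real. h (fst z + \<beta> * ln (snd z))) has_derivative
      (\<lambda>k. (fst k + \<beta> * (snd k * (1 / snd z))) * h' (fst z + \<beta> * ln (snd z)))) (at z)"
    using DERIV_compose_FDERIV[where g="\<lambda>z. fst z + \<beta> * ln (snd z)" and x=z, OF hd[OF t] dt] by simp
  have dp: "((\<lambda>z::real\<times>real. snd z powr e) has_derivative
      (\<lambda>k. snd z powr e * (0 * ln (snd z) + snd k * e / snd z))) (at z)"
    using has_derivative_powr[OF has_derivative_snd[OF has_derivative_ident] has_derivative_const[of e], of z UNIV] y
    by simp
  have "(cls e h has_derivative (\<lambda>k. snd z powr e * ((fst k + \<beta> * (snd k * (1 / snd z))) * h' (fst z + \<beta> * ln (snd z)))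
      + snd z powr e * (0 * ln (snd z) + snd k * e / snd z) * h (fst z + \<beta> * ln (snd z)))) (at z)"
    unfolding cls_def by (rule has_derivative_mult[OF dp dh])
  moreover have "(\<lambda>k. snd z powr e * ((fst k + \<beta> * (snd k * (1 / snd z))) * h' (fst z + \<beta> * ln (snd z)))
      + snd z powr e * (0 * ln (snd z) + snd k * e / snd z) * h (fst z + \<beta> * ln (snd z)))
     = (\<lambda>k. cls e h' z * fst k + cls (e - 1) (\<lambda>t. e * h t + \<beta> * h' t) z * snd k)"
    using y by (auto simp: fun_eq_iff cls_def powr_diff field_simps)
  ultimately show ?thesis by simp
qed

lemma cls_cont: "h \<in> A \<Longrightarrow> continuous_on W (cls e h)"
proof -
  assume "h \<in> A"
  then obtain h' where "\<forall>t>0. (h has_real_derivative h' t) (at t)" using A_deriv by blast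
  then have "\<And>z. z \<in> W \<Longrightarrow> isCont (cls e h) z"
    using cls_has_derivative has_derivative_continuous by blast
  then show ?thesis by (simp add: continuous_at_imp_continuous_on)
qed

lemma cls_Ck: "h \<in> A \<Longrightarrow> Ck_on k W (cls e h)"
proof (induction k arbitrary: e h)
  case 0
  then show ?case using cls_cont by simp
next
  case (Suc k)
  then obtain h' where h': "h' \<in> A" "\<forall>t>0. (h has_real_derivative h' t) (at t)" using A_deriv by blast
  have h2: "(\<lambda>t. e * h t + \<beta> * h' t) \<in> A" using Suc.prems h' by (intro A_add A_mult A_const)
  show ?case
    unfolding Ck_on.simps
    apply (rule exI[of _ "cls e h'"], rule exI[of _ "cls (e - 1) (\<lambda>t. e * h t + \<beta> * h' t)"])
    using cls_has_derivative h' Suc.IH[OF h'(1)] Suc.IH[OF h2] by blast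
qed

lemma pd1_cls:
  assumes z: "z \<in> W" and eq: "\<And>w. w \<in> W \<Longrightarrow> f w = cls e h w"
    and hd: "\<And>t. t > 0 \<Longrightarrow> (h has_real_derivative h' t) (at t)"
  shows "pd1 f z = cls e h' z"
proof -
  obtain x y where zxy: "z = (x, y)" by (cases z)
  have y: "y > 0" and t: "x + \<beta> * ln y > 0" using z unfolding W_def zxy by auto
  have d0: "((\<lambda>s. y powr e * h (s + \<beta> * ln y)) has_real_derivative y powr e * (h' (x + \<beta> * ln y) * 1)) (at x)"
    by (intro DERIV_cmult DERIV_chain2[where g="\<lambda>s. s + \<beta> * ln y" and x=x, OF hd[OF t]] derivative_eq_intros) auto
  have S: "open {s. 0 < s + \<beta> * ln y}"
    using open_Collect_less[of "\<lambda>s. 0" "\<lambda>s. s + \<beta> * ln y"] by (simp add: continuous_intros)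
  have "((\<lambda>s. f (s, y)) has_real_derivative y powr e * (h' (x + \<beta> * ln y) * 1)) (at x)"
    apply (rule has_field_derivative_transform_within_open[OF d0 S])
    using t y eq by (auto simp: W_def cls_def)
  then show ?thesis unfolding pd1_def zxy using DERIV_imp_deriv by (simp add: cls_def)
qed

lemma pd2_cls:
  assumes z: "z \<in> W" and eq: "\<And>w. w \<in> W \<Longrightarrow> f w = cls e h w"
    and hd: "\<And>t. t > 0 \<Longrightarrow> (h has_real_derivative h' t) (at t)"
  shows "pd2 f z = cls (e - 1) (\<lambda>t. e * h t + \<beta> * h' t) z"
proof -
  obtain x y where zxy: "z = (x, y)" by (cases z)
  have y: "y > 0" and t: "x + \<beta> * ln y > 0" using z unfolding W_def zxy by auto
  have din: "((\<lambda>s. x + \<beta> * ln s) has_real_derivative \<beta> * (1 / y)) (at y)"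
    using y by (intro derivative_eq_intros DERIV_ln_divide[OF y]) auto
  have d1: "((\<lambda>s. h (x + \<beta> * ln s)) has_real_derivative h' (x + \<beta> * ln y) * (\<beta> * (1 / y))) (at y)"
    using DERIV_chain2[where g="\<lambda>s. x + \<beta> * ln s" and x=y, OF hd[OF t] din] by simp
  have d0: "((\<lambda>s. s powr e * h (x + \<beta> * ln s)) has_real_derivative
       e * y powr (e - 1) * h (x + \<beta> * ln y) + y powr e * (h' (x + \<beta> * ln y) * (\<beta> * (1 / y)))) (at y)"
    by (rule DERIV_cong[OF DERIV_mult[OF has_real_derivative_powr[OF y, of e] d1]]) simp
  have S: "open ((\<lambda>s. (x, s)) -` W)"
    by (intro open_vimage W_open continuous_intros)
  have "((\<lambda>s. f (x, s)) has_real_derivative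
       e * y powr (e - 1) * h (x + \<beta> * ln y) + y powr e * (h' (x + \<beta> * ln y) * (\<beta> * (1 / y)))) (at y)"
    apply (rule has_field_derivative_transform_within_open[OF d0 S])
    using z eq by (auto simp: zxy cls_def)
  moreover have "e * y powr (e - 1) * h (x + \<beta> * ln y) + y powr e * (h' (x + \<beta> * ln y) * (\<beta> * (1 / y)))
     = cls (e - 1) (\<lambda>t. e * h t + \<beta> * h' t) (x, y)"
    using y by (simp add: cls_def powr_diff field_simps)
  ultimately show ?thesis unfolding pd2_def zxy using DERIV_imp_deriv by simp
qed

end


context sol begin

definition H where "H t = a * G t + \<beta> * Q t"
definition H' where "H' t = a * Q t + \<beta> * F t"
definition K where "K t = (a - 1) * H t + \<beta> * H' t"

lemma dH: assumes "t > 0" shows "(H has_real_derivative H' t) (at t)"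
  unfolding H_def[abs_def] H'_def using DERIV_add[OF DERIV_cmult[OF dG[OF assms]] DERIV_cmult[OF dQ'[OF assms]]] by simp

lemma key: assumes "t > 0" shows "F t * K t - (H' t)\<^sup>2 = G t powr p"
proof -
  have "F t * K t - (H' t)\<^sup>2 = F t * D t - a\<^sup>2 * (Q t)\<^sup>2"
    unfolding K_def H_def H'_def D_def power2_eq_square by algebra
  then show ?thesis using FD[OF assms] by simp
qed

abbreviation u where "u \<equiv> cls a G"

lemma pd1_u: "z \<in> W \<Longrightarrow> pd1 u z = cls a Q z"
  using pd1_cls[OF _ _ dG] by blast
lemma pd2_u: "z \<in> W \<Longrightarrow> pd2 u z = cls (a - 1) H z"
  using pd2_cls[OF _ _ dG, of z u a] unfolding H_def[abs_def] by simp
lemma pd11_u: "z \<in> W \<Longrightarrow> pd1 (pd1 u) z = cls a F z"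
  using pd1_cls[OF _ pd1_u dQ'] by blast
lemma pd21_u: "z \<in> W \<Longrightarrow> pd2 (pd1 u) z = cls (a - 1) H' z"
  using pd2_cls[OF _ pd1_u dQ', of z] unfolding H'_def[abs_def] by simp
lemma pd12_u: "z \<in> W \<Longrightarrow> pd1 (pd2 u) z = cls (a - 1) H' z"
  using pd1_cls[OF _ pd2_u dH] by blast
lemma pd22_u: "z \<in> W \<Longrightarrow> pd2 (pd2 u) z = cls (a - 2) K z"
  using pd2_cls[OF _ pd2_u dH, of z] unfolding K_def[abs_def] by (simp add: algebra_simps)

lemma W_t: "z \<in> W \<Longrightarrow> snd z > 0 \<and> fst z + \<beta> * ln (snd z) > 0"
  unfolding W_def by auto

lemma hess_det: assumes "z \<in> W"
  shows "cls a F z * cls (a - 2) K z - cls (a - 1) H' z * cls (a - 1) H' z = u z powr p"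
proof -
  obtain x y where zxy: "z = (x, y)" by (cases z)
  define t where "t = x + \<beta> * ln y"
  have y: "y > 0" and t: "t > 0" using W_t[OF assms] unfolding zxy t_def by auto
  have "cls a F z * cls (a - 2) K z - cls (a - 1) H' z * cls (a - 1) H' z
      = (y powr a * y powr (a - 2)) * F t * K t - (y powr (a - 1) * y powr (a - 1)) * (H' t)\<^sup>2"
    unfolding cls_def zxy t_def by (simp add: power2_eq_square ac_simps)
  also have "\<dots> = y powr (2 * a - 2) * (F t * K t - (H' t)\<^sup>2)"
  proof -
    have p1: "y powr a * y powr (a - 2) = y powr (2 * a - 2)"
      by (subst powr_add[symmetric]) simp
    have p2: "y powr (a - 1) * y powr (a - 1) = y powr (2 * a - 2)"
      by (subst powr_add[symmetric]) simp
    show ?thesis unfolding p1 p2 by (simp add: right_diff_distrib mult.assoc)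
  qed
  also have "\<dots> = y powr (a * p) * G t powr p" using key[OF t] ap by simp
  also have "\<dots> = u z powr p"
    unfolding cls_def zxy t_def using y Gpos[OF t[unfolded t_def]]
    by (simp add: powr_mult powr_powr)
  finally show ?thesis .
qed

lemma det_u: "z \<in> W \<Longrightarrow> det_hessian u z = u z powr p"
  unfolding det_hessian_def using pd11_u pd22_u pd21_u pd12_u hess_det by simp

lemma u_pos: assumes "z \<in> W" shows "u z > 0"
  using W_t[OF assms] Gpos[of "fst z + \<beta> * ln (snd z)"] unfolding cls_def by (intro mult_pos_pos) auto

lemma uxx_pos: assumes "z \<in> W" shows "cls a F z > 0"
  using W_t[OF assms] Fpos[of "fst z + \<beta> * ln (snd z)"] unfolding cls_def by (intro mult_pos_pos) auto

lemma quad_nonneg: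
  assumes "z \<in> W"
  shows "0 \<le> (cls a F z * v1 + cls (a - 1) H' z * v2) * v1 + (cls (a - 1) H' z * v1 + cls (a - 2) K z * v2) * v2"
proof -
  let ?A = "cls a F z" and ?B = "cls (a - 1) H' z" and ?C = "cls (a - 2) K z"
  have A: "?A > 0" using uxx_pos[OF assms] .
  have dd: "?A * ?C - ?B * ?B \<ge> 0" using hess_det[OF assms] u_pos[OF assms] by simp
  have "?A * ((?A * v1 + ?B * v2) * v1 + (?B * v1 + ?C * v2) * v2)
      = (?A * v1 + ?B * v2)\<^sup>2 + (?A * ?C - ?B * ?B) * v2\<^sup>2"
    unfolding power2_eq_square by algebra
  also have "\<dots> \<ge> 0" using dd by (intro add_nonneg_nonneg) auto
  finally show ?thesis using A by (simp add: zero_le_mult_iff)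
qed

lemma line_deriv:
  assumes w: "x1 + s *\<^sub>R v \<in> W" and hd: "\<And>t. t > 0 \<Longrightarrow> (h has_real_derivative h' t) (at t)"
  shows "((\<lambda>s. cls e h (x1 + s *\<^sub>R v)) has_real_derivative
     cls e h' (x1 + s *\<^sub>R v) * fst v + cls (e - 1) (\<lambda>t. e * h t + \<beta> * h' t) (x1 + s *\<^sub>R v) * snd v) (at s)"
proof -
  define A where "A = cls e h' (x1 + s *\<^sub>R v)"
  define B where "B = cls (e - 1) (\<lambda>t. e * h t + \<beta> * h' t) (x1 + s *\<^sub>R v)"
  have d0: "((\<lambda>s. s *\<^sub>R v) has_derivative (\<lambda>k. k *\<^sub>R v)) (at s)"
    by (rule has_derivative_scaleR_left[OF has_derivative_ident])
  have dl: "((\<lambda>s. x1 + s *\<^sub>R v) has_derivative (\<lambda>k. 0 + k *\<^sub>R v)) (at s)"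
    by (rule has_derivative_add[OF has_derivative_const d0])
  have c: "((\<lambda>s. cls e h (x1 + s *\<^sub>R v)) has_derivative
      (\<lambda>k. A * fst (0 + k *\<^sub>R v) + B * snd (0 + k *\<^sub>R v))) (at s)"
    unfolding A_def B_def by (rule has_derivative_compose[OF dl cls_has_derivative[OF w hd]])
  have eq: "(\<lambda>k. A * fst (0 + k *\<^sub>R v) + B * snd (0 + k *\<^sub>R v)) = (\<lambda>k. (A * fst v + B * snd v) * k)"
    by (rule ext) (simp add: algebra_simps)
  show ?thesis using c[unfolded eq, unfolded A_def B_def] unfolding has_field_derivative_def .
qed

lemma convex_u:
  assumes S: "convex S" "S \<subseteq> W"
  shows "convex_on S u"
proof (rule convex_onI[OF _ S(1)])
  fix \<theta> :: real and x1 x2 :: "real \<times> real" assume th: "0 < \<theta>" "\<theta> < 1" and xs: "x1 \<in> S" "x2 \<in> S"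
  define v where "v = x2 - x1"
  define \<gamma> where "\<gamma> s = x1 + s *\<^sub>R v" for s
  have \<gamma>S: "\<gamma> s \<in> S" if "s \<in> {0..1}" for s
  proof -
    have "\<gamma> s = (1 - s) *\<^sub>R x1 + s *\<^sub>R x2" unfolding \<gamma>_def v_def by (simp add: algebra_simps)
    moreover have "(1 - s) *\<^sub>R x1 + s *\<^sub>R x2 \<in> S"
      using that by (intro convexD_alt[OF S(1) xs]) auto
    ultimately show ?thesis by simp
  qed
  define d1 where "d1 s = cls a Q (\<gamma> s) * fst v + cls (a - 1) H (\<gamma> s) * snd v" for s
  have d1: "((\<lambda>s. u (\<gamma> s)) has_real_derivative d1 s) (at s)" if "s \<in> {0..1}" for s
  proof -
    have w: "x1 + s *\<^sub>R v \<in> W" using \<gamma>S[OF that] S(2) unfolding \<gamma>_def by auto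
    have "((\<lambda>s. cls a G (x1 + s *\<^sub>R v)) has_real_derivative
       cls a Q (x1 + s *\<^sub>R v) * fst v + cls (a - 1) (\<lambda>t. a * G t + \<beta> * Q t) (x1 + s *\<^sub>R v) * snd v) (at s)"
      by (rule line_deriv[OF w dG])
    then show ?thesis unfolding \<gamma>_def d1_def H_def[abs_def] .
  qed
  have d2: "(d1 has_real_derivative
      (cls a F (\<gamma> s) * fst v + cls (a - 1) H' (\<gamma> s) * snd v) * fst v
      + (cls (a - 1) H' (\<gamma> s) * fst v + cls (a - 2) K (\<gamma> s) * snd v) * snd v) (at s)"
    if "s \<in> {0..1}" for s
  proof -
    have w: "x1 + s *\<^sub>R v \<in> W" using \<gamma>S[OF that] S(2) unfolding \<gamma>_def by auto
    have a1: "((\<lambda>s. cls a Q (x1 + s *\<^sub>R v)) has_real_derivative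
       cls a F (x1 + s *\<^sub>R v) * fst v + cls (a - 1) H' (x1 + s *\<^sub>R v) * snd v) (at s)"
      using line_deriv[OF w dQ'] unfolding H'_def[abs_def] .
    have a2: "((\<lambda>s. cls (a - 1) H (x1 + s *\<^sub>R v)) has_real_derivative
       cls (a - 1) H' (x1 + s *\<^sub>R v) * fst v + cls (a - 2) K (x1 + s *\<^sub>R v) * snd v) (at s)"
    proof -
      have e2: "a - 1 - 1 = a - 2" by simp
      show ?thesis using line_deriv[OF w dH, of "a - 1", unfolded e2] unfolding K_def[abs_def] .
    qed
    show ?thesis unfolding d1_def[abs_def] \<gamma>_def
      by (rule DERIV_add[OF DERIV_cmult_right[OF a1] DERIV_cmult_right[OF a2]])
  qed
  have mono: "d1 s1 \<le> d1 s2" if "0 \<le> s1" "s1 \<le> s2" "s2 \<le> 1" for s1 s2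
  proof (rule DERIV_nonneg_imp_increasing_open[OF that(2)])
    fix s assume "s1 < s" "s < s2"
    then have s01: "s \<in> {0..1}" using that by auto
    have gw: "\<gamma> s \<in> W" using \<gamma>S[OF s01] S(2) by auto
    show "\<exists>y. (d1 has_real_derivative y) (at s) \<and> 0 \<le> y"
      by (rule exI, rule conjI[OF d2[OF s01] quad_nonneg[OF gw]])
  next
    have "isCont d1 s" if "s \<in> {s1..s2}" for s
    proof -
      have "s \<in> {0..1}" using that \<open>0 \<le> s1\<close> \<open>s2 \<le> 1\<close> by auto
      then show ?thesis by (rule DERIV_isCont[OF d2])
    qed
    then show "continuous_on {s1..s2} d1" by (simp add: continuous_at_imp_continuous_on)
  qed
  have cv: "convex_on {0..1} (\<lambda>s. u (\<gamma> s))"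
  proof (rule convex_on_realI[OF _ d1])
    show "connected {0..1::real}" by simp
  next
    fix x y :: real assume "x \<in> {0..1}" "y \<in> {0..1}" "x \<le> y"
    then show "d1 x \<le> d1 y" by (intro mono) auto
  qed
  have e0: "\<gamma> 0 = x1" and e1: "\<gamma> 1 = x2" and et: "\<gamma> \<theta> = (1 - \<theta>) *\<^sub>R x1 + \<theta> *\<^sub>R x2"
    unfolding \<gamma>_def v_def by (simp_all add: algebra_simps)
  have "u (\<gamma> \<theta>) \<le> (1 - \<theta>) * u (\<gamma> 0) + \<theta> * u (\<gamma> 1)"
    using convex_onD[OF cv, of \<theta> 0 1] th by simp
  then show "u ((1 - \<theta>) *\<^sub>R x1 + \<theta> *\<^sub>R x2) \<le> (1 - \<theta>) * u x1 + \<theta> * u x2"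
    by (simp only: e0 e1 et)
qed

end


lemma dom_iff:
  fixes x y \<beta> :: real assumes y: "y > 0"
  shows "exp x * y powr \<beta> = exp (x + \<beta> * ln y)"
  using y by (simp add: powr_def exp_add)

theorem proposition7p1:
  fixes p \<beta> :: real
  assumes "0 < p" and "p < 1/2" and "\<beta> < 0"
  shows "\<exists>r0 > 0. \<exists>u :: real \<times> real \<Rightarrow> real.
     (\<forall>z\<in>wiping_domain \<beta> r0. \<exists>e>0. ball z e \<subseteq> wiping_domain \<beta> r0 \<and> convex_on (ball z e) u)
   \<and> C_infinity_on (wiping_domain \<beta> r0) u
   \<and> continuous_on (wiping_domain \<beta> r0 \<union> wiping_curve \<beta> r0) u
   \<and> (\<forall>z\<in>wiping_domain \<beta> r0. u z > 0)
   \<and> (\<forall>z\<in>wiping_domain \<beta> r0. det_hessian u z = u z powr p)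
   \<and> (\<forall>z\<in>wiping_curve \<beta> r0. u z = 0)"
proof -
  define a where "a = 2 / (2 - p)"
  define b where "b = - \<beta>"
  have a1: "a > 1" unfolding a_def using assms by (simp add: field_simps)
  have b0: "b > 0" unfolding b_def using assms by simp
  have ap: "a * p = 2 * a - 2" unfolding a_def using assms by (simp add: field_simps)
  interpret O: ode a b p using a1 b0 assms by unfold_locales auto
  obtain w where wf: "O.TT w = w" using O.TT_fix by blast
  interpret O2: ode2 a b p w using wf by unfold_locales
  interpret S: sol a \<beta> p O2.Gi O2.Qi
  proof unfold_locales
    show "a > 1" "\<beta> < 0" "0 < p" "a * p = 2 * a - 2" using a1 assms ap by auto
    show "O2.Gi 0 = 0" by (rule O2.Gi0)
    show "continuous_on {0..} O2.Gi" by (rule O2.Gi_cont)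
    show "\<And>t. 0 < t \<Longrightarrow> 0 < O2.Gi t" by (rule O2.Gi_pos)
    show "\<And>t. 0 < t \<Longrightarrow> 0 < O2.Qi t" by (rule O2.Qi_pos)
    show "\<And>t. 0 < t \<Longrightarrow> (O2.Gi has_real_derivative O2.Qi t) (at t)"
      using O2.Gi_deriv unfolding O2.Qi_def by simp
    show "\<And>t. 0 < t \<Longrightarrow> (O2.Qi has_real_derivative
        (a\<^sup>2 * (O2.Qi t)\<^sup>2 + O2.Gi t powr p) / (a * (a - 1) * O2.Gi t - \<beta> * O2.Qi t)) (at t)"
      using O2.Qi_deriv unfolding O.al_def b_def by simp
  qed
  define u where "u = S.cls a O2.Gi"
  have dom: "wiping_domain \<beta> 1 = S.W"
    unfolding wiping_domain_def S.W_def by (auto simp: dom_iff)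
  have cur: "wiping_curve \<beta> 1 = {z. 0 < snd z \<and> fst z + \<beta> * ln (snd z) = 0}"
    unfolding wiping_curve_def by (auto simp: dom_iff)
  have f1: "(\<forall>z\<in>S.W. \<exists>e>0. ball z e \<subseteq> S.W \<and> convex_on (ball z e) u)"
  proof
    fix z assume "z \<in> S.W"
    then obtain e where "e > 0" "ball z e \<subseteq> S.W" using S.W_open openE by blast
    then show "\<exists>e>0. ball z e \<subseteq> S.W \<and> convex_on (ball z e) u"
      unfolding u_def using S.convex_u[OF convex_ball] by blast
  qed
  have f2: "C_infinity_on S.W u"
    unfolding C_infinity_on_def u_def using S.cls_Ck[OF S.A_G] by blast
  have f3: "continuous_on (S.W \<union> {z. 0 < snd z \<and> fst z + \<beta> * ln (snd z) = 0}) u"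
  proof -
    define S0 where "S0 = {z :: real \<times> real. 0 < snd z \<and> 0 \<le> fst z + \<beta> * ln (snd z)}"
    have sub: "S.W \<union> {z. 0 < snd z \<and> fst z + \<beta> * ln (snd z) = 0} \<subseteq> S0"
      unfolding S0_def S.W_def by auto
    have c1: "continuous_on S0 (\<lambda>z. fst z + \<beta> * ln (snd z))"
      unfolding S0_def by (intro continuous_intros) auto
    have c2: "continuous_on S0 (\<lambda>z. O2.Gi (fst z + \<beta> * ln (snd z)))"
      by (rule continuous_on_compose2[OF O2.Gi_cont c1]) (auto simp: S0_def)
    have c3: "continuous_on S0 (\<lambda>z. snd z powr a)"
      unfolding S0_def by (intro continuous_intros) auto
    have "continuous_on S0 u"
      unfolding u_def S.cls_def by (intro continuous_intros c2 c3)
    then show ?thesis using sub continuous_on_subset by blast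
  qed
  have f4: "\<forall>z\<in>S.W. u z > 0" unfolding u_def using S.u_pos by blast
  have f5: "\<forall>z\<in>S.W. det_hessian u z = u z powr p" unfolding u_def using S.det_u by blast
  have f6: "\<forall>z\<in>{z. 0 < snd z \<and> fst z + \<beta> * ln (snd z) = 0}. u z = 0"
    unfolding u_def S.cls_def using O2.Gi0 by simp
  show ?thesis
    apply (rule exI[of _ "1::real"])
    apply (rule conjI)
     apply simp
    unfolding dom cur
    apply (rule exI[of _ u])
    by (intro conjI f1 f2 f3 f4 f5 f6)
qed

end
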